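(* Let $v=[q;w_1,\ldots,w_n]$ be a WVG and $i\neq j$ players with $w_j\ge w_i$. Then $\beta_{\&\{i,j\}}(v_{\&\{i,j\}})\ge\beta_i(v)$; i.e. annexing a player of at least equal weight can never decrease the annexer's Banzhaf index.
   Context: A weighted voting game (WVG) $v=[q;w_1,\ldots,w_n]$ has player set $N=\{1,\ldots,n\}$, nonnegative weights $w_j$ and quota $q$ with $0<q\le \sum_j w_j$; a coalition $S\subseteq N$ is winning iff $\sum_{j\in S}w_j\ge q$. Player $j$ is critical in $S$ if $S$ is winning and $S\setminus\{j\}$ is losing; $\eta_j(v)$ is the number of coalitions in which $j$ is critical; $\beta_j(v)=\eta_j(v)/\sum_k\eta_k(v)$. The merged game $v_{\&T}$ has the same quota, players outside $T$ keep their weights, and the players of $T$ are replaced by one player $\&T$ of weight $\sum_{j\in T}w_j$. *)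

theory Defs
  imports Complex_Main
begin

definition winning :: "('p \<Rightarrow> real) \<Rightarrow> real \<Rightarrow> 'p set \<Rightarrow> bool" where
  "winning w q S \<longleftrightarrow> (\<Sum>k\<in>S. w k) \<ge> q"

definition critical :: "('p \<Rightarrow> real) \<Rightarrow> real \<Rightarrow> 'p \<Rightarrow> 'p set \<Rightarrow> bool" where
  "critical w q j S \<longleftrightarrow> winning w q S \<and> \<not> winning w q (S - {j})"

definition eta :: "'p set \<Rightarrow> ('p \<Rightarrow> real) \<Rightarrow> real \<Rightarrow> 'p \<Rightarrow> nat" where
  "eta P w q j = card {S. S \<subseteq> P \<and> critical w q j S}"

definition banzhaf :: "'p set \<Rightarrow> ('p \<Rightarrow> real) \<Rightarrow> real \<Rightarrow> 'p \<Rightarrow> real" where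
  "banzhaf P w q j = real (eta P w q j) / (\<Sum>k\<in>P. real (eta P w q k))"

text \<open>Merged game: the players of T are replaced by the single player T (the set itself);
  every other player k becomes the singleton {k}.\<close>
definition merged_players :: "'p set \<Rightarrow> 'p set \<Rightarrow> 'p set set" where
  "merged_players P T = (\<lambda>k. {k}) ` (P - T) \<union> {T}"

definition merged_weight :: "('p \<Rightarrow> real) \<Rightarrow> 'p set \<Rightarrow> real" where
  "merged_weight w X = (\<Sum>k\<in>X. w k)"

end

theory Submission
  imports Defs
begin

lemma mp_disj: "X \<in> merged_players P T \<Longrightarrow> Y \<in> merged_players P T \<Longrightarrow> X \<noteq> Y \<Longrightarrow> X \<inter> Y = {}"
  by (auto simp: merged_players_def)

lemma mp_ne: "T \<noteq> {} \<Longrightarrow> X \<in> merged_players P T \<Longrightarrow> X \<noteq> {}"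
  by (auto simp: merged_players_def)

lemma mp_fin: "finite T \<Longrightarrow> X \<in> merged_players P T \<Longrightarrow> finite X"
  by (auto simp: merged_players_def)

lemma mp_finite: "finite P \<Longrightarrow> finite (merged_players P T)"
  by (auto simp: merged_players_def)

lemma mp_sub: "T \<subseteq> P \<Longrightarrow> X \<in> merged_players P T \<Longrightarrow> X \<subseteq> P"
  by (auto simp: merged_players_def)

lemma sum_mw:
  assumes "finite P" "finite T" "S \<subseteq> merged_players P T"
  shows "sum (merged_weight w) S = sum w (\<Union>S)"
proof -
  have a1: "\<forall>A\<in>S. finite A" using assms(2,3) mp_fin by auto
  have a2: "\<forall>A\<in>S. \<forall>B\<in>S. A \<noteq> B \<longrightarrow> A \<inter> B = {}" using assms(3) mp_disj by (metis subsetD)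
  have "sum w (\<Union>S) = (sum \<circ> sum) w S"
    by (rule sum.Union_disjoint[OF a1 a2])
  thus ?thesis by (simp add: merged_weight_def o_def)
qed

lemma Union_minus:
  assumes "S \<subseteq> merged_players P T" "X \<in> merged_players P T"
  shows "\<Union>(S - {X}) = \<Union>S - X"
proof
  show "\<Union>S - X \<subseteq> \<Union>(S - {X})" by blast
  show "\<Union>(S - {X}) \<subseteq> \<Union>S - X"
  proof
    fix x assume "x \<in> \<Union>(S - {X})"
    then obtain Y where Y: "Y \<in> S" "Y \<noteq> X" "x \<in> Y" by blast
    have "Y \<inter> X = {}" using mp_disj[of Y P T X] Y assms by blast
    then show "x \<in> \<Union>S - X" using Y by blast
  qed
qed
lemma inj_Union:
  assumes "T \<noteq> {}"
  shows "inj_on Union (Pow (merged_players P T))"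
proof (rule inj_onI)
  fix A B assume A: "A \<in> Pow (merged_players P T)" and B: "B \<in> Pow (merged_players P T)"
    and e: "\<Union>A = \<Union>B"
  have *: "A' \<subseteq> B'" if A': "A' \<subseteq> merged_players P T" and B': "B' \<subseteq> merged_players P T"
    and e': "\<Union>A' = \<Union>B'" for A' B'
  proof
    fix X assume X: "X \<in> A'"
    then obtain x where x: "x \<in> X" using mp_ne[OF assms] A' by blast
    then obtain Y where Y: "Y \<in> B'" "x \<in> Y" using e' X by blast
    have "X = Y" using mp_disj[of X P T Y] X Y x A' B' by blast
    thus "X \<in> B'" using Y by simp
  qed
  show "A = B" using *[of A B] *[of B A] A B e by auto
qed

lemma crit_merged:
  assumes "finite P" "finite T" "S \<subseteq> merged_players P T" "X \<in> merged_players P T"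
  shows "critical (merged_weight w) q X S \<longleftrightarrow> winning w q (\<Union>S) \<and> \<not> winning w q (\<Union>S - X)"
proof -
  have "S - {X} \<subseteq> merged_players P T" using assms by blast
  then show ?thesis
    unfolding critical_def winning_def
    using sum_mw[OF assms(1,2,3)] sum_mw[OF assms(1,2), of "S - {X}"] Union_minus[OF assms(3,4)]
    by simp
qed

lemma crit_mem: "critical w q k S \<Longrightarrow> k \<in> S"
proof (rule ccontr)
  assume "critical w q k S" "k \<notin> S"
  then have "S - {k} = S" by blast
  with \<open>critical w q k S\<close> show False unfolding critical_def by simp
qed

lemma eta_le_other:
  assumes P: "finite P" "finite T" "T \<subseteq> P" "T \<noteq> {}" and k: "k \<in> P - T"
  shows "eta (merged_players P T) (merged_weight w) q {k} \<le> eta P w q k"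
proof -
  let ?M = "merged_players P T"
  let ?A = "{S. S \<subseteq> ?M \<and> critical (merged_weight w) q {k} S}"
  have kM: "{k} \<in> ?M" using k by (auto simp: merged_players_def)
  have "card ?A = card (Union ` ?A)"
    by (rule card_image[symmetric], rule inj_on_subset[OF inj_Union[OF P(4)]]) auto
  also have "\<dots> \<le> card {S. S \<subseteq> P \<and> critical w q k S}"
  proof (rule card_mono)
    show "finite {S. S \<subseteq> P \<and> critical w q k S}" using P(1) by simp
    show "Union ` ?A \<subseteq> {S. S \<subseteq> P \<and> critical w q k S}"
    proof
      fix U assume "U \<in> Union ` ?A"
      then obtain S where S: "S \<subseteq> ?M" "critical (merged_weight w) q {k} S" "U = \<Union>S" by blast
      have "U \<subseteq> P" using S mp_sub[OF P(3)] by blast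
      moreover have "critical w q k U"
        using S crit_merged[OF P(1,2) S(1) kM] unfolding critical_def by simp
      ultimately show "U \<in> {S. S \<subseteq> P \<and> critical w q k S}" by simp
    qed
  qed
  finally show ?thesis unfolding eta_def .
qed

lemma eta_merge_le:
  assumes P: "finite P" "i \<in> P" "j \<in> P" "i \<noteq> j"
  shows "eta (merged_players P {i,j}) (merged_weight w) q {i,j} \<le> eta P w q i + eta P w q j"
proof -
  let ?M = "merged_players P {i,j}"
  let ?A = "{S. S \<subseteq> ?M \<and> critical (merged_weight w) q {i,j} S}"
  let ?Ci = "{S. S \<subseteq> P \<and> critical w q i S}"
  let ?Cj = "{S. S \<subseteq> P \<and> critical w q j S}"
  have TM: "{i,j} \<in> ?M" by (auto simp: merged_players_def)
  have fin: "finite ?Ci" "finite ?Cj" using P(1) by auto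
  have "card ?A = card (Union ` ?A)"
    by (rule card_image[symmetric], rule inj_on_subset[OF inj_Union[of "{i,j}" P]]) auto
  also have "\<dots> \<le> card (?Ci \<union> insert i ` ?Cj)"
  proof (rule card_mono)
    show "finite (?Ci \<union> insert i ` ?Cj)" using fin by simp
    show "Union ` ?A \<subseteq> ?Ci \<union> insert i ` ?Cj"
    proof
      fix U assume "U \<in> Union ` ?A"
      then obtain S where S: "S \<subseteq> ?M" "critical (merged_weight w) q {i,j} S" "U = \<Union>S" by blast
      have UP: "U \<subseteq> P" using S mp_sub[of "{i,j}" P] P by blast
      have TS: "{i,j} \<in> S" using crit_mem[OF S(2)] .
      have iU: "i \<in> U" "j \<in> U" using TS S(3) by auto
      have cU: "winning w q U" "\<not> winning w q (U - {i,j})"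
        using S crit_merged[OF P(1) _ S(1) TM] by auto
      show "U \<in> ?Ci \<union> insert i ` ?Cj"
      proof (cases "winning w q (U - {i})")
        case False
        then have "U \<in> ?Ci" using cU UP unfolding critical_def by simp
        then show ?thesis by simp
      next
        case True
        have "U - {i} - {j} = U - {i,j}" by blast
        then have "U - {i} \<in> ?Cj" using True cU UP unfolding critical_def by auto
        moreover have "U = insert i (U - {i})" using iU by blast
        ultimately show ?thesis by blast
      qed
    qed
  qed
  also have "\<dots> \<le> card ?Ci + card (insert i ` ?Cj)" by (rule card_Un_le)
  also have "\<dots> \<le> card ?Ci + card ?Cj" using card_image_le[OF fin(2)] by simp
  finally show ?thesis unfolding eta_def .
qed


lemma key_inj: fixes w :: "'a \<Rightarrow> real"
  assumes P: "finite P" "i \<noteq> j" and wij: "w j \<ge> w i"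
  and S1: "S1 \<subseteq> P" "critical w q i S1" and S2: "S2 \<subseteq> P" "critical w q i S2"
  and j1: "j \<in> S1" and j2: "j \<notin> S2"
  and e: "insert j S1 = insert j S2" shows False
proof -
  have e1: "S1 = insert j S2" using e insert_absorb[OF j1] by argo
  have i2: "i \<in> S2" using crit_mem[OF S2(2)] .
  have f2: "finite S2" using finite_subset[OF S2(1) P(1)] .
  have "S1 - {i} = insert j (S2 - {i})" using e1 P(2) by blast
  hence s1: "sum w (S1 - {i}) = w j + sum w (S2 - {i})" using f2 j2 by simp
  have s2: "sum w S2 = w i + sum w (S2 - {i})" using sum.remove[OF f2 i2] .
  have "sum w (S1 - {i}) < q" "sum w S2 \<ge> q"
    using S1(2) S2(2) unfolding critical_def winning_def by auto
  with s1 s2 wij show False by linarith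
qed

lemma inj_insj: fixes w :: "'a \<Rightarrow> real"
  assumes P: "finite P" "i \<noteq> j" and wij: "w j \<ge> w i"
  shows "inj_on (insert j) {S. S \<subseteq> P \<and> critical w q i S}"
proof (rule inj_onI)
  fix S1 S2 assume S1: "S1 \<in> {S. S \<subseteq> P \<and> critical w q i S}" and S2: "S2 \<in> {S. S \<subseteq> P \<and> critical w q i S}"
    and e: "insert j S1 = insert j S2"
  show "S1 = S2"
  proof (cases "j \<in> S1 \<longleftrightarrow> j \<in> S2")
    case True
    show ?thesis
    proof (rule set_eqI)
      fix x
      from e have "x \<in> insert j S1 \<longleftrightarrow> x \<in> insert j S2" by simp
      then show "x \<in> S1 \<longleftrightarrow> x \<in> S2" using True by (cases "x = j") auto
    qed
  next
    case False
    show ?thesis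
    proof (cases "j \<in> S1")
      case True
      with False have "j \<notin> S2" by simp
      with True show ?thesis using key_inj[where q=q, OF P wij _ _ _ _ True _ e] S1 S2 by simp
    next
      case f: False
      with False have "j \<in> S2" by simp
      with f show ?thesis using key_inj[where q=q, OF P wij _ _ _ _ _ f e[symmetric]] S1 S2 by simp
    qed
  qed
qed

lemma img_insj:
  assumes P: "finite P" "i \<in> P" "j \<in> P" "i \<noteq> j" and nn: "\<forall>k\<in>P. w k \<ge> (0::real)"
    and S: "S \<subseteq> P" "critical w q i S"
  shows "insert j S \<in> Union ` {S. S \<subseteq> merged_players P {i,j} \<and> critical (merged_weight w) q {i,j} S}"
proof -
  let ?M = "merged_players P {i,j}"
  define U where "U = insert j S"
  have TM: "{i,j} \<in> ?M" by (auto simp: merged_players_def)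
  have iS: "i \<in> S" using crit_mem[OF S(2)] .
  have fS: "finite S" using finite_subset[OF S(1) P(1)] .
  have UP: "U \<subseteq> P" using S(1) P(3) unfolding U_def by blast
  define S' where "S' = {X \<in> ?M. X \<subseteq> U}"
  have S'M: "S' \<subseteq> ?M" unfolding S'_def by blast
  have US': "\<Union>S' = U"
  proof
    show "\<Union>S' \<subseteq> U" unfolding S'_def by blast
    show "U \<subseteq> \<Union>S'"
    proof
      fix x assume x: "x \<in> U"
      show "x \<in> \<Union>S'"
      proof (cases "x \<in> {i,j}")
        case True
        have "{i,j} \<subseteq> U" using iS unfolding U_def by blast
        then have "{i,j} \<in> S'" unfolding S'_def using TM by blast
        then show ?thesis using True by blast
      next
        case False
        have "x \<in> P" using x UP by blast
        then have "{x} \<in> ?M" using False by (auto simp: merged_players_def)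
        then have "{x} \<in> S'" unfolding S'_def using x by blast
        then show ?thesis by blast
      qed
    qed
  qed
  have win: "winning w q U"
  proof (cases "j \<in> S")
    case True then have "U = S" unfolding U_def by blast
    then show ?thesis using S(2) unfolding critical_def by simp
  next
    case False
    then have "sum w U = w j + sum w S" using fS unfolding U_def by simp
    moreover have "w j \<ge> 0" using nn P(3) by blast
    ultimately show ?thesis using S(2) unfolding critical_def winning_def by linarith
  qed
  have los: "\<not> winning w q (U - {i,j})"
  proof -
    have sub: "U - {i,j} \<subseteq> S - {i}" unfolding U_def by blast
    have nn2: "\<forall>k\<in>(S - {i}) - (U - {i,j}). w k \<ge> 0" using nn S(1) by blast
    have "sum w (U - {i,j}) \<le> sum w (S - {i})"
      by (rule sum_mono2) (use fS sub nn2 in auto)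
    then show ?thesis using S(2) unfolding critical_def winning_def by linarith
  qed
  have "critical (merged_weight w) q {i,j} S'"
    using crit_merged[OF P(1) _ S'M TM] US' win los by simp
  then show ?thesis using S'M US' unfolding U_def by blast
qed

lemma eta_i_le:
  assumes P: "finite P" "i \<in> P" "j \<in> P" "i \<noteq> j" and nn: "\<forall>k\<in>P. w k \<ge> 0"
    and wij: "w j \<ge> w i"
  shows "eta P w q i \<le> eta (merged_players P {i,j}) (merged_weight w) q {i,j}"
proof -
  let ?M = "merged_players P {i,j}"
  let ?A = "{S. S \<subseteq> ?M \<and> critical (merged_weight w) q {i,j} S}"
  let ?Ci = "{S. S \<subseteq> P \<and> critical w q i S}"
  have finA: "finite ?A" by (rule finite_subset[of _ "Pow ?M"]) (auto intro: mp_finite[OF P(1)])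
  have "card ?Ci \<le> card (Union ` ?A)"
  proof (rule card_inj_on_le[where f = "insert j"])
    show "finite (Union ` ?A)" using finA by simp
    show "inj_on (insert j) ?Ci" by (rule inj_insj[OF P(1,4) wij])
    show "insert j ` ?Ci \<subseteq> Union ` ?A"
      using img_insj[OF P nn] by blast
  qed
  also have "card (Union ` ?A) = card ?A"
    by (rule card_image, rule inj_on_subset[OF inj_Union[of "{i,j}" P]]) auto
  finally show ?thesis unfolding eta_def .
qed

theorem mainTheorem13:
  fixes n :: nat and w :: "nat \<Rightarrow> real" and q :: real and i j :: nat
  assumes "\<forall>k\<in>{1..n}. w k \<ge> 0"
    and "0 < q" and "q \<le> (\<Sum>k\<in>{1..n}. w k)"
    and "i \<in> {1..n}" and "j \<in> {1..n}" and "i \<noteq> j"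
    and "w j \<ge> w i"
  shows "banzhaf (merged_players {1..n} {i, j}) (merged_weight w) q {i, j}
           \<ge> banzhaf {1..n} w q i"
proof -
  define P where "P = {1..n}"
  define M where "M = merged_players P {i,j}"
  define e' where "e' = (\<lambda>X. real (eta M (merged_weight w) q X))"
  define e where "e = (\<lambda>k. real (eta P w q k))"
  have fP: "finite P" unfolding P_def by simp
  have iP: "i \<in> P" and jP: "j \<in> P" using assms(4,5) unfolding P_def by auto
  have nn: "\<forall>k\<in>P. w k \<ge> 0" using assms(1) unfolding P_def by simp
  have M_eq: "M = insert {i,j} ((\<lambda>k. {k}) ` (P - {i,j}))"
    unfolding M_def merged_players_def by auto
  have notin: "{i,j} \<notin> (\<lambda>k. {k}) ` (P - {i,j})" using assms(6) by auto
  have injs: "inj_on (\<lambda>k. {k}) (P - {i,j})" by (auto simp: inj_on_def)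
  have fin2: "finite ((\<lambda>k. {k}) ` (P - {i,j}))" using fP by simp
  have S'eq: "(\<Sum>X\<in>M. e' X) = e' {i,j} + (\<Sum>k\<in>P - {i,j}. e' {k})"
    unfolding M_eq using sum.insert[OF fin2 notin, of e'] sum.reindex[OF injs, of e']
    by (simp add: o_def)
  have P_eq: "P = insert i (insert j (P - {i,j}))" using iP jP by auto
  have Seq: "(\<Sum>k\<in>P. e k) = e i + (e j + (\<Sum>k\<in>P - {i,j}. e k))"
  proof -
    have f: "finite (P - {i,j})" using fP by simp
    have "(\<Sum>k\<in>P. e k) = (\<Sum>k\<in>insert i (insert j (P - {i,j})). e k)"
      using P_eq by simp
    also have "\<dots> = e i + (e j + (\<Sum>k\<in>P - {i,j}. e k))"
      using f assms(6) by simp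
    finally show ?thesis .
  qed
  have le1: "e' {i,j} \<le> e i + e j"
    using eta_merge_le[OF fP iP jP assms(6), of w q] unfolding e'_def e_def M_def by simp
  have le2: "e' {k} \<le> e k" if "k \<in> P - {i,j}" for k
    using eta_le_other[OF fP _ _ _ that, of w q] iP jP unfolding e'_def e_def M_def by simp
  have le3: "e i \<le> e' {i,j}"
    using eta_i_le[OF fP iP jP assms(6) nn assms(7), of q] unfolding e'_def e_def M_def by simp
  have sle: "(\<Sum>k\<in>P - {i,j}. e' {k}) \<le> (\<Sum>k\<in>P - {i,j}. e k)"
    by (rule sum_mono) (rule le2)
  have nn1: "e i \<ge> 0" "e j \<ge> 0" unfolding e_def by auto
  have nn2: "(\<Sum>k\<in>P - {i,j}. e' {k}) \<ge> 0" unfolding e'_def by (simp add: sum_nonneg)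
  define A where "A = (\<Sum>X\<in>M. e' X)"
  define B where "B = (\<Sum>k\<in>P. e k)"
  have AB: "A \<le> B" and aA: "e' {i,j} \<le> A" and ia: "e i \<le> e' {i,j}"
    using S'eq Seq le1 sle le3 nn1 nn2 unfolding A_def B_def by linarith+
  have goal: "e i / B \<le> e' {i,j} / A"
  proof (cases "A = 0")
    case True
    then have "e i = 0" using aA ia nn1 by linarith
    then show ?thesis using True by simp
  next
    case False
    then have Ap: "A > 0" using aA ia nn1 by linarith
    have "e i / B \<le> e i / A" using Ap AB nn1 by (intro divide_left_mono) auto
    also have "\<dots> \<le> e' {i,j} / A" using Ap ia by (intro divide_right_mono) auto
    finally show ?thesis .
  qed
  show ?thesis using goal unfolding banzhaf_def A_def B_def e_def e'_def M_def P_def .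
qed
end
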